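(* Let $\Lambda=A_{\rm tri}\mathbb{Z}^2$, and let $\mathcal R,V$ satisfy the assumptions in the context, including the line reflection symmetry $S\mathcal R=\mathcal R$ and $V(A)=V((-A_{S\rho})_{\rho\in\mathcal R})$ for all $A$. Let $W(F)=\frac1{\det A_{\rm tri}}V((F\cdot\rho)_{\rho\in\mathcal R})$ for $F\in\mathbb{R}^2$. Then $\nabla^3W(0)=c_{\rm quad}(E_{111}-3\,\mathrm{sym}E_{122})$ for some $c_{\rm quad}\in\mathbb{R}$, and therefore for twice differentiable $u,v$, $$\mathrm{div}\big(\nabla^3W(0)[\nabla u,\nabla v]\big)=c_{\rm quad}\left(\begin{pmatrix}\partial_{11}v-\partial_{22}v\\-2\partial_{12}v\end{pmatrix}\cdot\nabla u+\begin{pmatrix}\partial_{11}u-\partial_{22}u\\-2\partial_{12}u\end{pmatrix}\cdot\nabla v\right).$$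
   Context: $A_{\rm tri}=\begin{pmatrix}1&\frac12\\0&\frac{\sqrt3}{2}\end{pmatrix}$, $Q_\Lambda$ is the rotation through $2\pi/3$, and $S=\begin{pmatrix}\frac12&\frac{\sqrt3}{2}\\\frac{\sqrt3}{2}&-\frac12\end{pmatrix}$. $\mathcal R\subset\Lambda\setminus\{0\}$ is finite with $\mathrm{span}_\mathbb{Z}\mathcal R=\Lambda$ and $Q_\Lambda\mathcal R=\mathcal R$. $V\in C^6(\mathbb{R}^{\mathcal R},\mathbb{R})$ satisfies $V(A)=V((A_{Q_\Lambda\rho})_\rho)$, is periodic with minimal period $p>0$ in each component, and is lattice stable (there is $c_0>0$ with $\sum_x\sum_{\rho,\sigma}\nabla^2V(0)_{\rho\sigma}D_\rho u(x)D_\sigma u(x)\ge c_0\sum_x|(D_\rho u(x))_\rho|^2$ for all $u$ with finite right-hand side, $D_\rho u(x)=u(x+\rho)-u(x)$). $E_{ijk}=e_i\otimes e_j\otimes e_k$, $(\mathrm{sym}A)_{l_1l_2l_3}=\frac16\sum_{\varphi\in S_3}A_{l_{\varphi(1)}l_{\varphi(2)}l_{\varphi(3)}}$. For a 3-tensor $T$, $T[\nabla u,\nabla v]$ is the vector with components $\sum_{j,k}T_{ijk}\partial_ju\,\partial_kv$. *)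

theory Defs
  imports "HOL-Analysis.Analysis"
begin

definition pd :: "'n::finite \<Rightarrow> (real^'n \<Rightarrow> real) \<Rightarrow> real^'n \<Rightarrow> real" where
  "pd i f x = deriv (\<lambda>t. f (x + t *\<^sub>R axis i 1)) 0"

fun Ck :: "nat \<Rightarrow> (real^'n::finite \<Rightarrow> real) \<Rightarrow> bool" where
  "Ck 0 f = continuous_on UNIV f"
| "Ck (Suc k) f = (continuous_on UNIV f \<and>
      (\<forall>i x. (\<lambda>t. f (x + t *\<^sub>R axis i 1)) differentiable (at 0)) \<and>
      (\<forall>i. Ck k (pd i f)))"

definition twice_diff :: "(real^'n::finite \<Rightarrow> real) \<Rightarrow> bool" where
  "twice_diff u = ((\<forall>x. u differentiable (at x)) \<and> (\<forall>i x. pd i u differentiable (at x)))"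

definition grad :: "(real^'n::finite \<Rightarrow> real) \<Rightarrow> real^'n \<Rightarrow> real^'n" where
  "grad u x = (\<chi> i. pd i u x)"

definition divg :: "(real^'n::finite \<Rightarrow> real^'n) \<Rightarrow> real^'n \<Rightarrow> real" where
  "divg G x = (\<Sum>i\<in>UNIV. pd i (\<lambda>y. G y $ i) x)"

definition A_tri :: "real^2^2" where
  "A_tri = vector [vector [1, 1/2], vector [0, sqrt 3 / 2]]"

definition Q_rot :: "real^2^2" where
  "Q_rot = vector [vector [cos (2*pi/3), - sin (2*pi/3)], vector [sin (2*pi/3), cos (2*pi/3)]]"

definition S_refl :: "real^2^2" where
  "S_refl = vector [vector [1/2, sqrt 3 / 2], vector [sqrt 3 / 2, - 1/2]]"

definition Lambda_tri :: "(real^2) set" where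
  "Lambda_tri = {A_tri *v vector [of_int a, of_int b] | a b :: int. True}"

definition zspan :: "(real^2) set \<Rightarrow> (real^2) set" where
  "zspan R = {x. \<exists>c :: real^2 \<Rightarrow> int. x = (\<Sum>\<rho>\<in>R. of_int (c \<rho>) *\<^sub>R \<rho>)}"

text \<open>Reindexing (A_\<rho>)_\<rho> \<mapsto> (A_{M\<rho>})_\<rho>, where rho enumerates R.\<close>
definition reindex :: "('r \<Rightarrow> real^2) \<Rightarrow> real^2^2 \<Rightarrow> real^'r \<Rightarrow> real^'r" where
  "reindex rho M A = (\<chi> r. A $ (inv rho (M *v rho r)))"

definition Ddiff :: "('r \<Rightarrow> real^2) \<Rightarrow> 'r \<Rightarrow> (real^2 \<Rightarrow> real) \<Rightarrow> real^2 \<Rightarrow> real" where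
  "Ddiff rho r u x = u (x + rho r) - u x"

definition E3 :: "2 \<Rightarrow> 2 \<Rightarrow> 2 \<Rightarrow> (2 \<Rightarrow> 2 \<Rightarrow> 2 \<Rightarrow> real)" where
  "E3 i j k = (\<lambda>a b c. if a = i \<and> b = j \<and> c = k then 1 else 0)"

definition sym3 :: "(2 \<Rightarrow> 2 \<Rightarrow> 2 \<Rightarrow> real) \<Rightarrow> (2 \<Rightarrow> 2 \<Rightarrow> 2 \<Rightarrow> real)" where
  "sym3 A = (\<lambda>l1 l2 l3. (1/6) * (A l1 l2 l3 + A l1 l3 l2 + A l2 l1 l3
                               + A l2 l3 l1 + A l3 l1 l2 + A l3 l2 l1))"

end

theory Submission
  imports Defs
begin

lemma Ck_cont: "Ck k h \<Longrightarrow> continuous_on UNIV h"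
  by (cases k) auto

lemma Ck_C1: "Ck (Suc k) g \<Longrightarrow> (\<forall>i x. (\<lambda>t. g (x + t *\<^sub>R axis i 1)) differentiable (at 0)) \<and> (\<forall>i. continuous_on UNIV (pd i g))"
  using Ck_cont by simp blast

lemma line_deriv:
  assumes "\<forall>i x. (\<lambda>t. g (x + t *\<^sub>R axis i 1)) differentiable (at 0)"
  shows "((\<lambda>t. g (x + t *\<^sub>R axis i 1)) has_real_derivative pd i g x) (at 0)"
  unfolding pd_def using assms DERIV_deriv_iff_real_differentiable by blast

lemma line_deriv_at:
  assumes "\<forall>i x. (\<lambda>t. g (x + t *\<^sub>R axis i 1)) differentiable (at 0)"
  shows "((\<lambda>s. g (y + s *\<^sub>R axis i 1)) has_real_derivative pd i g (y + t *\<^sub>R axis i 1)) (at t)"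
proof -
  have "((\<lambda>s. g ((y + t *\<^sub>R axis i 1) + s *\<^sub>R axis i 1)) has_real_derivative pd i g (y + t *\<^sub>R axis i 1)) (at 0)"
    by (rule line_deriv[OF assms])
  then have "((\<lambda>s. g (y + (s + t) *\<^sub>R axis i 1)) has_real_derivative pd i g (y + t *\<^sub>R axis i 1)) (at 0)"
    by (simp add: algebra_simps)
  then show ?thesis using DERIV_shift[of "\<lambda>s. g (y + s *\<^sub>R axis i 1)" _ 0 t] by simp
qed

lemma mvt_any:
  fixes \<phi> :: "real \<Rightarrow> real"
  assumes "\<And>s. DERIV \<phi> s :> \<phi>' s"
  shows "\<exists>\<xi>. \<bar>\<xi> - a\<bar> \<le> \<bar>b - a\<bar> \<and> \<phi> b - \<phi> a = (b - a) * \<phi>' \<xi>"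
proof (cases a b rule: linorder_cases)
  case less
  then obtain z where "a < z" "z < b" "\<phi> b - \<phi> a = (b - a) * \<phi>' z" using MVT2[of a b \<phi> \<phi>'] assms by blast
  then show ?thesis by (intro exI[of _ z]) auto
next
  case equal then show ?thesis by auto
next
  case greater
  then obtain z where "b < z" "z < a" "\<phi> a - \<phi> b = (a - b) * \<phi>' z" using MVT2[of b a \<phi> \<phi>'] assms by blast
  then show ?thesis by (intro exI[of _ z]) (auto simp: algebra_simps)
qed

lemma dir_deriv_S:
  fixes g :: "real^'n::finite \<Rightarrow> real"
  assumes ld: "\<forall>i x. (\<lambda>t. g (x + t *\<^sub>R axis i 1)) differentiable (at 0)"
    and cp: "\<forall>i. continuous_on UNIV (pd i g)"
    and fin: "finite S"
  shows "\<forall>x w. (\<forall>r. r \<notin> S \<longrightarrow> w$r = 0) \<longrightarrow> ((\<lambda>t. g (x + t *\<^sub>R w)) has_real_derivative (\<Sum>r\<in>S. w$r * pd r g x)) (at 0)"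
  using fin
proof (induction S rule: finite_induct)
  case empty
  show ?case
  proof (intro allI impI)
    fix x w :: "real^'n" assume "\<forall>r. r \<notin> {} \<longrightarrow> w$r = 0"
    then have "w = 0" by (simp add: vec_eq_iff)
    then show "((\<lambda>t. g (x + t *\<^sub>R w)) has_real_derivative (\<Sum>r\<in>{}. w$r * pd r g x)) (at 0)" by simp
  qed
next
  case (insert a S)
  show ?case
  proof (intro allI impI)
    fix x w :: "real^'n" assume supp: "\<forall>r. r \<notin> insert a S \<longrightarrow> w$r = 0"
    define e where "e = (axis a 1 :: real^'n)"
    define w' where "w' = w - (w$a) *\<^sub>R e"
    have supp': "\<forall>r. r \<notin> S \<longrightarrow> w'$r = 0" using supp insert(2) by (auto simp: w'_def e_def axis_def)
    have G: "((\<lambda>t. g (x + t *\<^sub>R w')) has_real_derivative (\<Sum>r\<in>S. w'$r * pd r g x)) (at 0)"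
      using insert(3) supp' by blast
    have sumeq: "(\<Sum>r\<in>S. w'$r * pd r g x) = (\<Sum>r\<in>S. w$r * pd r g x)"
      using insert(2) by (intro sum.cong) (auto simp: w'_def e_def axis_def)
    define F where "F t = g (x + t *\<^sub>R w) - g (x + t *\<^sub>R w')" for t
    have F: "(F has_real_derivative (w$a * pd a g x)) (at 0)"
    proof -
      have F0: "F 0 = 0" by (simp add: F_def)
      have "isCont (pd a g) x" using cp continuous_on_eq_continuous_at[of UNIV] by auto
      then have cont: "\<forall>e>0. \<exists>d>0. \<forall>x'. dist x' x < d \<longrightarrow> dist (pd a g x') (pd a g x) < e"
        by (simp add: continuous_at_eps_delta)
      have "(\<lambda>t. F t / t) \<midarrow>0\<rightarrow> w$a * pd a g x"
        unfolding LIM_eq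
      proof (intro allI impI)
        fix \<epsilon> :: real assume "\<epsilon> > 0"
        define \<eta> where "\<eta> = \<epsilon> / (\<bar>w$a\<bar> + 1)"
        have "\<eta> > 0" using \<open>\<epsilon> > 0\<close> by (simp add: \<eta>_def)
        then obtain d where d: "d > 0" "\<And>x'. dist x' x < d \<Longrightarrow> dist (pd a g x') (pd a g x) < \<eta>"
          using cont by blast
        define s where "s = d / (norm w' + \<bar>w$a\<bar> + 1)"
        have pos: "norm w' + \<bar>w$a\<bar> + 1 > 0" by (smt (verit) norm_ge_zero abs_ge_zero)
        have "s > 0" using d pos by (simp add: s_def)
        moreover have "\<forall>t. t \<noteq> 0 \<and> norm (t - 0) < s \<longrightarrow> norm (F t / t - w$a * pd a g x) < \<epsilon>"
        proof (intro allI impI)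
          fix t :: real assume t: "t \<noteq> 0 \<and> norm (t - 0) < s"
          define y where "y = x + t *\<^sub>R w'"
          have "\<And>\<sigma>. DERIV (\<lambda>\<sigma>. g (y + \<sigma> *\<^sub>R e)) \<sigma> :> pd a g (y + \<sigma> *\<^sub>R e)"
            unfolding e_def by (rule line_deriv_at[OF ld])
          then obtain \<xi> where \<xi>: "\<bar>\<xi> - 0\<bar> \<le> \<bar>t * w$a - 0\<bar>"
            "g (y + (t * w$a) *\<^sub>R e) - g (y + 0 *\<^sub>R e) = (t * w$a - 0) * pd a g (y + \<xi> *\<^sub>R e)"
            using mvt_any[of "\<lambda>\<sigma>. g (y + \<sigma> *\<^sub>R e)" "\<lambda>\<sigma>. pd a g (y + \<sigma> *\<^sub>R e)" 0 "t * w$a"] by blast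
          have "x + t *\<^sub>R w = y + (t * w$a) *\<^sub>R e" by (simp add: y_def w'_def algebra_simps)
          then have Ft: "F t = t * w$a * pd a g (y + \<xi> *\<^sub>R e)" using \<xi>(2) unfolding F_def y_def by (simp add: add.assoc)
          have "dist (y + \<xi> *\<^sub>R e) x = norm (t *\<^sub>R w' + \<xi> *\<^sub>R e)" by (simp add: y_def dist_norm)
          also have "\<dots> \<le> \<bar>t\<bar> * norm w' + \<bar>\<xi>\<bar>" using norm_triangle_ineq[of "t *\<^sub>R w'" "\<xi> *\<^sub>R e"] by (simp add: e_def)
          also have "\<dots> \<le> \<bar>t\<bar> * norm w' + \<bar>t\<bar> * \<bar>w$a\<bar>" using \<xi>(1) by (simp add: abs_mult)
          also have "\<dots> = \<bar>t\<bar> * (norm w' + \<bar>w$a\<bar>)" by (simp add: algebra_simps)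
          also have "\<dots> \<le> \<bar>t\<bar> * (norm w' + \<bar>w$a\<bar> + 1)" by (simp add: mult_left_mono)
          also have "\<dots> < s * (norm w' + \<bar>w$a\<bar> + 1)"
            using t pos by (intro mult_strict_right_mono) auto
          also have "\<dots> = d" using pos by (simp add: s_def)
          finally have "dist (pd a g (y + \<xi> *\<^sub>R e)) (pd a g x) < \<eta>" using d(2) by blast
          then have lt: "\<bar>pd a g (y + \<xi> *\<^sub>R e) - pd a g x\<bar> < \<eta>" by (simp add: dist_real_def)
          have "norm (F t / t - w$a * pd a g x) = \<bar>w$a\<bar> * \<bar>pd a g (y + \<xi> *\<^sub>R e) - pd a g x\<bar>"
            using t by (simp add: Ft abs_mult[symmetric] algebra_simps)
          also have "\<dots> \<le> \<bar>w$a\<bar> * \<eta>" using lt by (intro mult_left_mono) auto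
          also have "\<dots> < \<epsilon>" using \<open>\<epsilon> > 0\<close> by (simp add: \<eta>_def field_simps)
          finally show "norm (F t / t - w$a * pd a g x) < \<epsilon>" .
        qed
        ultimately show "\<exists>s>0. \<forall>t. t \<noteq> 0 \<and> norm (t - 0) < s \<longrightarrow> norm (F t / t - w$a * pd a g x) < \<epsilon>" by blast
      qed
      then show ?thesis using F0 by (simp add: has_field_derivative_iff)
    qed
    have eq: "(\<lambda>t. g (x + t *\<^sub>R w)) = (\<lambda>t. F t + g (x + t *\<^sub>R w'))" by (simp add: F_def)
    show "((\<lambda>t. g (x + t *\<^sub>R w)) has_real_derivative (\<Sum>r\<in>insert a S. w$r * pd r g x)) (at 0)"
      unfolding eq using DERIV_add[OF F G] insert(1,2) sumeq by simp
  qed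
qed

lemma dir_deriv:
  fixes g :: "real^'n::finite \<Rightarrow> real"
  assumes ld: "\<forall>i x. (\<lambda>t. g (x + t *\<^sub>R axis i 1)) differentiable (at 0)"
    and cp: "\<forall>i. continuous_on UNIV (pd i g)"
  shows "((\<lambda>t. g (x + t *\<^sub>R w)) has_real_derivative (\<Sum>r\<in>UNIV. w$r * pd r g x)) (at 0)"
  using dir_deriv_S[OF ld cp, of UNIV] by simp

lemma lineL:
  fixes g :: "real^'r::finite \<Rightarrow> real" and rho :: "'r \<Rightarrow> real^2"
  assumes ld: "\<forall>i x. (\<lambda>t. g (x + t *\<^sub>R axis i 1)) differentiable (at 0)"
    and cp: "\<forall>i. continuous_on UNIV (pd i g)"
  shows "((\<lambda>h. g (\<chi> r. (F + h *\<^sub>R axis k 1) \<bullet> rho r)) has_real_derivative (\<Sum>r\<in>UNIV. rho r $ k * pd r g (\<chi> r. F \<bullet> rho r))) (at 0)"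
proof -
  have eq: "(\<lambda>h. g (\<chi> r. (F + h *\<^sub>R axis k 1) \<bullet> rho r)) = (\<lambda>h. g ((\<chi> r. F \<bullet> rho r) + h *\<^sub>R (\<chi> r. rho r $ k)))"
    by (rule ext, rule arg_cong[where f=g]) (simp add: vec_eq_iff inner_add_left inner_axis')
  show ?thesis unfolding eq using dir_deriv[OF ld cp, of "\<chi> r. F \<bullet> rho r" "\<chi> r. rho r $ k"] by simp
qed

lemma pd_inv:
  fixes g :: "real^'r::finite \<Rightarrow> real"
  assumes ld: "\<forall>i x. (\<lambda>t. g (x + t *\<^sub>R axis i 1)) differentiable (at 0)"
    and M: "\<And>A h. M (A + h *\<^sub>R axis s 1) = M A + (\<epsilon>*h) *\<^sub>R axis t 1"
  shows "pd s (\<lambda>A. a * g (M A)) A = a * \<epsilon> * pd t g (M A)"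
proof -
  have d1: "((\<lambda>h. g (M A + h *\<^sub>R axis t 1)) has_real_derivative pd t g (M A)) (at ((\<lambda>h. \<epsilon>*h) 0))"
    using line_deriv[OF ld] by simp
  have d2: "((\<lambda>h. \<epsilon>*h) has_real_derivative \<epsilon>) (at 0)"
    using DERIV_cmult_Id by blast
  have "((\<lambda>h. g (M A + (\<epsilon>*h) *\<^sub>R axis t 1)) has_real_derivative pd t g (M A) * \<epsilon>) (at 0)"
    using DERIV_chain[OF d1 d2] by (simp add: o_def)
  then have "((\<lambda>h. a * g (M (A + h *\<^sub>R axis s 1))) has_real_derivative a * (pd t g (M A) * \<epsilon>)) (at 0)"
    unfolding M by (rule DERIV_cmult)
  then show ?thesis unfolding pd_def by (simp add: DERIV_imp_deriv)
qed

lemma sym_props: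
  fixes rho :: "'r::finite \<Rightarrow> real^2"
  assumes inj: "inj rho" and R: "R = range rho" and MR: "(\<lambda>x. Mm *v x) ` R = R"
  shows "bij (\<lambda>r. inv rho (Mm *v rho r))" "\<And>r. rho (inv rho (Mm *v rho r)) = Mm *v rho r"
proof -
  show rp: "\<And>r. rho (inv rho (Mm *v rho r)) = Mm *v rho r"
  proof -
    fix r
    have "Mm *v rho r \<in> range rho" using MR R by blast
    then show "rho (inv rho (Mm *v rho r)) = Mm *v rho r" by (rule f_inv_into_f)
  qed
  have "surj (\<lambda>r. inv rho (Mm *v rho r))"
  proof -
    { fix t
      have "rho t \<in> (\<lambda>x. Mm *v x) ` R" using MR R by auto
      then obtain r where "rho t = Mm *v rho r" using R by auto
      then have "\<exists>r. t = inv rho (Mm *v rho r)" using inj by (metis inv_f_f) }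
    then show ?thesis by blast
  qed
  then show "bij (\<lambda>r. inv rho (Mm *v rho r))"
    using finite_UNIV_surj_inj[of "\<lambda>r. inv rho (Mm *v rho r)"] by (simp add: bij_def)
qed

lemma D_inv:
  fixes V :: "real^'r::finite \<Rightarrow> real"
  assumes V6: "Ck 6 V" and V_eq: "\<And>A. V A = V (M A)"
    and M: "\<And>t A h. M (A + h *\<^sub>R axis (\<pi> t) 1) = M A + (\<epsilon>*h) *\<^sub>R axis t 1"
    and M0: "M 0 = 0"
  shows "pd (\<pi> r) (pd (\<pi> s) (pd (\<pi> t) V)) 0 = \<epsilon> * \<epsilon> * \<epsilon> * pd r (pd s (pd t V)) 0"
proof -
  have c0: "Ck (Suc 5) V" using V6 by (simp add: numeral_eq_Suc)
  have c1: "Ck (Suc 4) (pd t V)" using V6 by (simp add: numeral_eq_Suc)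
  have c2: "Ck (Suc 3) (pd s (pd t V))" using V6 by (simp add: numeral_eq_Suc)
  have e: "V = (\<lambda>A. 1 * V (M A))" by (simp add: fun_eq_iff V_eq[symmetric])
  have h1: "pd (\<pi> t) V = (\<lambda>A. \<epsilon> * pd t V (M A))"
  proof
    fix A
    have "pd (\<pi> t) (\<lambda>A. 1 * V (M A)) A = 1 * \<epsilon> * pd t V (M A)"
      by (rule pd_inv) (use Ck_C1[OF c0] M in auto)
    then show "pd (\<pi> t) V A = \<epsilon> * pd t V (M A)" using e by simp
  qed
  have h2: "pd (\<pi> s) (pd (\<pi> t) V) = (\<lambda>A. \<epsilon> * \<epsilon> * pd s (pd t V) (M A))"
  proof
    fix A
    show "pd (\<pi> s) (pd (\<pi> t) V) A = \<epsilon> * \<epsilon> * pd s (pd t V) (M A)"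
      unfolding h1 by (rule pd_inv) (use Ck_C1[OF c1] M in auto)
  qed
  have "pd (\<pi> r) (pd (\<pi> s) (pd (\<pi> t) V)) 0 = \<epsilon> * \<epsilon> * \<epsilon> * pd r (pd s (pd t V)) (M 0)"
    unfolding h2 by (rule pd_inv) (use Ck_C1[OF c2] M in auto)
  then show ?thesis using M0 by simp
qed

lemma sum_bij_reindex: "bij \<pi> \<Longrightarrow> (\<Sum>t\<in>UNIV. f (\<pi> t)) = (\<Sum>t\<in>UNIV. f t)"
  by (rule sum.reindex_bij_betw) (simp add: bij_def bij_betw_def)

lemma mat_expand:
  fixes Mm :: "real^2^2" and rho :: "'r::finite \<Rightarrow> real^2"
  shows "(\<Sum>t\<in>UNIV. (Mm *v rho t)$k * (\<Sum>s\<in>UNIV. (Mm *v rho s)$j * (\<Sum>r\<in>UNIV. (Mm *v rho r)$i * X r s t)))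
    = (\<Sum>a\<in>UNIV. \<Sum>b\<in>UNIV. \<Sum>c\<in>UNIV. Mm$i$a * Mm$j$b * Mm$k$c *
         (\<Sum>t\<in>UNIV. rho t $ c * (\<Sum>s\<in>UNIV. rho s $ b * (\<Sum>r\<in>UNIV. rho r $ a * X r s t))))"
  by (simp add: matrix_vector_mult_def sum_2 sum_distrib_left sum_distrib_right sum.distrib algebra_simps)

lemma frechet_line:
  fixes f :: "real^'n::finite \<Rightarrow> real"
  assumes "(f has_derivative D) (at (a + t *\<^sub>R w))"
  shows "((\<lambda>s. f (a + s *\<^sub>R w)) has_real_derivative D w) (at t)"
proof -
  have l: "((\<lambda>s. a + s *\<^sub>R w) has_derivative (\<lambda>s. s *\<^sub>R w)) (at t)"
    by (auto intro!: derivative_eq_intros)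
  have "((\<lambda>s. f (a + s *\<^sub>R w)) has_derivative (\<lambda>s. D (s *\<^sub>R w))) (at t)"
    using has_derivative_compose[OF l assms] by (simp add: o_def)
  moreover have "(\<lambda>s. D (s *\<^sub>R w)) = (\<lambda>s. D w * s)"
    using has_derivative_bounded_linear[OF assms] by (auto simp: fun_eq_iff linear_simps bounded_linear.linear)
  ultimately show ?thesis by (simp add: has_field_derivative_def)
qed

lemma pd_frechet:
  fixes f :: "real^'n::finite \<Rightarrow> real"
  assumes "(f has_derivative D) (at p)"
  shows "pd i f p = D (axis i 1)"
  unfolding pd_def using frechet_line[of f D p 0 "axis i 1"] assms by (simp add: DERIV_imp_deriv)

lemma diff_line:
  fixes f :: "real^'n::finite \<Rightarrow> real"
  assumes "f differentiable (at (a + t *\<^sub>R axis i 1))"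
  shows "((\<lambda>s. f (a + s *\<^sub>R axis i 1)) has_real_derivative pd i f (a + t *\<^sub>R axis i 1)) (at t)"
proof -
  obtain D where D: "(f has_derivative D) (at (a + t *\<^sub>R axis i 1))" using assms differentiable_def by blast
  show ?thesis using frechet_line[OF D] pd_frechet[OF D] by simp
qed

lemma schwarz_K:
  fixes f :: "real^'n::finite \<Rightarrow> real"
  assumes fd: "\<forall>x. f differentiable (at x)" and gd: "pd i f differentiable (at x)"
    and "\<epsilon> > 0"
  shows "\<exists>\<delta>>0. \<forall>h. 0 < h \<and> h < \<delta> \<longrightarrow>
     \<bar>(f (x + h *\<^sub>R axis j 1 + h *\<^sub>R axis i 1) - f (x + h *\<^sub>R axis i 1) - f (x + h *\<^sub>R axis j 1) + f x) - h\<^sup>2 * pd j (pd i f) x\<bar> \<le> \<epsilon> * h\<^sup>2"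
proof -
  define g where "g = pd i f"
  obtain Dg where Dg: "(g has_derivative Dg) (at x)" using gd differentiable_def g_def by blast
  have bl: "bounded_linear Dg" using Dg has_derivative_bounded_linear by blast
  have pdj: "pd j g x = Dg (axis j 1)" using pd_frechet[OF Dg] .
  have "\<epsilon>/3 > 0" using assms by simp
  then obtain d where d: "d > 0" "\<And>y. norm (y - x) < d \<Longrightarrow> \<bar>g y - g x - Dg (y - x)\<bar> \<le> \<epsilon>/3 * norm (y - x)"
    using Dg[unfolded has_derivative_at_alt] by (metis real_norm_def)
  show ?thesis
  proof (intro exI[of _ "d/2"] conjI allI impI)
    show "d/2 > 0" using d by simp
    fix h :: real assume h: "0 < h \<and> h < d/2"
    define a where "a = x + h *\<^sub>R axis j 1"
    define \<phi> where "\<phi> t = f (a + t *\<^sub>R axis i 1) - f (x + t *\<^sub>R axis i 1)" for t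
    have der: "\<And>t. DERIV \<phi> t :> g (a + t *\<^sub>R axis i 1) - g (x + t *\<^sub>R axis i 1)"
      unfolding \<phi>_def g_def using fd by (intro DERIV_diff diff_line) auto
    obtain \<xi> where \<xi>: "0 < \<xi>" "\<xi> < h" "\<phi> h - \<phi> 0 = (h - 0) * (g (a + \<xi> *\<^sub>R axis i 1) - g (x + \<xi> *\<^sub>R axis i 1))"
      using MVT2[of 0 h \<phi>, OF _ der] h by blast
    have \<Delta>: "f (x + h *\<^sub>R axis j 1 + h *\<^sub>R axis i 1) - f (x + h *\<^sub>R axis i 1) - f (x + h *\<^sub>R axis j 1) + f x = \<phi> h - \<phi> 0"
      by (simp add: \<phi>_def a_def)
    define y1 where "y1 = a + \<xi> *\<^sub>R axis i 1"
    define y2 where "y2 = x + \<xi> *\<^sub>R axis i 1"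
    have e1: "y1 - x = h *\<^sub>R axis j 1 + \<xi> *\<^sub>R axis i 1" by (simp add: y1_def a_def)
    have "norm (y1 - x) \<le> h + \<xi>" unfolding e1
      using norm_triangle_ineq[of "h *\<^sub>R (axis j 1 :: real^'n)" "\<xi> *\<^sub>R (axis i 1 :: real^'n)"] h \<xi> by simp
    then have n1: "norm (y1 - x) \<le> 2 * h" using \<xi> by simp
    have n2: "norm (y2 - x) \<le> h" using \<xi> by (simp add: y2_def)
    have b1: "\<bar>g y1 - g x - Dg (y1 - x)\<bar> \<le> \<epsilon>/3 * (2*h)"
    proof -
      have "norm (y1 - x) < d" using n1 h by linarith
      then have "\<bar>g y1 - g x - Dg (y1 - x)\<bar> \<le> \<epsilon>/3 * norm (y1 - x)" by (rule d(2))
      also have "\<dots> \<le> \<epsilon>/3 * (2*h)" using n1 \<open>\<epsilon>/3 > 0\<close> by (intro mult_left_mono) auto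
      finally show ?thesis .
    qed
    have b2: "\<bar>g y2 - g x - Dg (y2 - x)\<bar> \<le> \<epsilon>/3 * h"
    proof -
      have "norm (y2 - x) < d" using n2 h by linarith
      then have "\<bar>g y2 - g x - Dg (y2 - x)\<bar> \<le> \<epsilon>/3 * norm (y2 - x)" by (rule d(2))
      also have "\<dots> \<le> \<epsilon>/3 * h" using n2 \<open>\<epsilon>/3 > 0\<close> by (intro mult_left_mono) auto
      finally show ?thesis .
    qed
    have lin: "Dg (y1 - x) - Dg (y2 - x) = h * Dg (axis j 1)"
    proof -
      have "y1 - x = (y2 - x) + h *\<^sub>R axis j 1" by (simp add: y1_def y2_def a_def algebra_simps)
      then show ?thesis using bl by (simp add: bounded_linear.linear linear_simps)
    qed
    have "\<bar>(g y1 - g y2) - h * pd j g x\<bar> \<le> \<epsilon>/3 * (2*h) + \<epsilon>/3 * h"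
      using b1 b2 lin unfolding abs_le_iff pdj by linarith
    then have c: "\<bar>(g y1 - g y2) - h * pd j g x\<bar> \<le> \<epsilon> * h" by simp
    have eqh: "(\<phi> h - \<phi> 0) - h\<^sup>2 * pd j g x = h * ((g y1 - g y2) - h * pd j g x)"
      using \<xi>(3) by (simp add: y1_def y2_def power2_eq_square algebra_simps)
    have "\<bar>(\<phi> h - \<phi> 0) - h\<^sup>2 * pd j g x\<bar> = h * \<bar>(g y1 - g y2) - h * pd j g x\<bar>"
      unfolding eqh using h by (simp add: abs_mult)
    also have "\<dots> \<le> h * (\<epsilon> * h)" using c h by (simp add: mult_left_mono)
    finally show "\<bar>(f (x + h *\<^sub>R axis j 1 + h *\<^sub>R axis i 1) - f (x + h *\<^sub>R axis i 1) - f (x + h *\<^sub>R axis j 1) + f x) - h\<^sup>2 * pd j (pd i f) x\<bar> \<le> \<epsilon> * h\<^sup>2"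
      unfolding \<Delta> g_def by (simp add: power2_eq_square algebra_simps)
  qed
qed

lemma schwarz:
  fixes f :: "real^'n::finite \<Rightarrow> real"
  assumes fd: "\<forall>x. f differentiable (at x)" and gd: "\<forall>i x. pd i f differentiable (at x)"
  shows "pd j (pd i f) x = pd i (pd j f) x"
proof (rule ccontr)
  assume ne: "pd j (pd i f) x \<noteq> pd i (pd j f) x"
  define \<epsilon> where "\<epsilon> = \<bar>pd j (pd i f) x - pd i (pd j f) x\<bar> / 4"
  have ep: "\<epsilon> > 0" using ne by (simp add: \<epsilon>_def)
  obtain d1 where d1: "d1 > 0" "\<forall>h. 0 < h \<and> h < d1 \<longrightarrow>
     \<bar>(f (x + h *\<^sub>R axis j 1 + h *\<^sub>R axis i 1) - f (x + h *\<^sub>R axis i 1) - f (x + h *\<^sub>R axis j 1) + f x) - h\<^sup>2 * pd j (pd i f) x\<bar> \<le> \<epsilon> * h\<^sup>2"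
    using schwarz_K[OF fd _ ep, of i x j] gd by blast
  obtain d2 where d2: "d2 > 0" "\<forall>h. 0 < h \<and> h < d2 \<longrightarrow>
     \<bar>(f (x + h *\<^sub>R axis i 1 + h *\<^sub>R axis j 1) - f (x + h *\<^sub>R axis j 1) - f (x + h *\<^sub>R axis i 1) + f x) - h\<^sup>2 * pd i (pd j f) x\<bar> \<le> \<epsilon> * h\<^sup>2"
    using schwarz_K[OF fd _ ep, of j x i] gd by blast
  define h where "h = min d1 d2 / 2"
  have h: "0 < h" "h < d1" "h < d2" using d1 d2 by (auto simp: h_def)
  have comm: "x + h *\<^sub>R axis i 1 + h *\<^sub>R axis j 1 = x + h *\<^sub>R axis j 1 + h *\<^sub>R axis i 1" by (simp add: algebra_simps)
  define \<Delta> where "\<Delta> = f (x + h *\<^sub>R axis j 1 + h *\<^sub>R axis i 1) - f (x + h *\<^sub>R axis i 1) - f (x + h *\<^sub>R axis j 1) + f x"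
  define D1 where "D1 = pd j (pd i f) x"
  define D2 where "D2 = pd i (pd j f) x"
  have a1: "\<bar>\<Delta> - h\<^sup>2 * D1\<bar> \<le> \<epsilon> * h\<^sup>2" using d1(2) h unfolding \<Delta>_def D1_def by blast
  have a2: "\<bar>\<Delta> - h\<^sup>2 * D2\<bar> \<le> \<epsilon> * h\<^sup>2"
  proof -
    have "\<bar>(f (x + h *\<^sub>R axis i 1 + h *\<^sub>R axis j 1) - f (x + h *\<^sub>R axis j 1) - f (x + h *\<^sub>R axis i 1) + f x) - h\<^sup>2 * D2\<bar> \<le> \<epsilon> * h\<^sup>2"
      using d2(2) h unfolding D2_def by blast
    moreover have "f (x + h *\<^sub>R axis i 1 + h *\<^sub>R axis j 1) - f (x + h *\<^sub>R axis j 1) - f (x + h *\<^sub>R axis i 1) + f x = \<Delta>"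
      unfolding \<Delta>_def comm by simp
    ultimately show ?thesis by simp
  qed
  have "\<bar>h\<^sup>2 * D1 - h\<^sup>2 * D2\<bar> \<le> 2 * \<epsilon> * h\<^sup>2"
    using a1 a2 unfolding abs_le_iff by linarith
  moreover have "\<bar>h\<^sup>2 * D1 - h\<^sup>2 * D2\<bar> = h\<^sup>2 * \<bar>D1 - D2\<bar>"
    by (simp add: abs_mult right_diff_distrib[symmetric])
  ultimately have "h\<^sup>2 * \<bar>D1 - D2\<bar> \<le> h\<^sup>2 * (2 * \<epsilon>)" by (simp add: mult_ac)
  then have "\<bar>D1 - D2\<bar> \<le> 2 * \<epsilon>" using h by simp
  then have "\<bar>pd j (pd i f) x - pd i (pd j f) x\<bar> \<le> 2 * \<epsilon>" by (simp add: D1_def D2_def)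
  then show False using ep by (simp add: \<epsilon>_def)
qed

lemma pd_bilin:
  fixes u v :: "real^'n::finite \<Rightarrow> real"
  assumes ud: "\<forall>j x. pd j u differentiable (at x)" and vd: "\<forall>k x. pd k v differentiable (at x)"
  shows "pd i (\<lambda>y. \<Sum>j\<in>UNIV. \<Sum>k\<in>UNIV. C j k * pd j u y * pd k v y) x =
     (\<Sum>j\<in>UNIV. \<Sum>k\<in>UNIV. C j k * (pd i (pd j u) x * pd k v x + pd j u x * pd i (pd k v) x))"
proof -
  have du: "((\<lambda>h. pd j u (x + h *\<^sub>R axis i 1)) has_real_derivative pd i (pd j u) x) (at 0)" for j
    using diff_line[of "pd j u" x 0 i] ud by simp
  have dv: "((\<lambda>h. pd k v (x + h *\<^sub>R axis i 1)) has_real_derivative pd i (pd k v) x) (at 0)" for k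
    using diff_line[of "pd k v" x 0 i] vd by simp
  have "((\<lambda>h. \<Sum>j\<in>UNIV. \<Sum>k\<in>UNIV. C j k * pd j u (x + h *\<^sub>R axis i 1) * pd k v (x + h *\<^sub>R axis i 1)) has_real_derivative
     (\<Sum>j\<in>UNIV. \<Sum>k\<in>UNIV. C j k * (pd i (pd j u) x * pd k v x + pd j u x * pd i (pd k v) x))) (at 0)"
  proof (intro DERIV_sum)
    fix j k
    have "((\<lambda>h. C j k * (pd j u (x + h *\<^sub>R axis i 1) * pd k v (x + h *\<^sub>R axis i 1))) has_real_derivative
      C j k * (pd i (pd j u) x * pd k v (x + 0 *\<^sub>R axis i 1) + pd i (pd k v) x * pd j u (x + 0 *\<^sub>R axis i 1))) (at 0)"
      by (intro DERIV_cmult DERIV_mult du dv)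
    then show "((\<lambda>h. C j k * pd j u (x + h *\<^sub>R axis i 1) * pd k v (x + h *\<^sub>R axis i 1)) has_real_derivative
      C j k * (pd i (pd j u) x * pd k v x + pd j u x * pd i (pd k v) x)) (at 0)"
      by (simp add: algebra_simps)
  qed
  then show ?thesis unfolding pd_def by (simp add: DERIV_imp_deriv)
qed

lemma s3a: "sqrt 3 * (sqrt 3 * x) = (3::real) * x"
  by (simp add: mult.assoc[symmetric])

lemma solve:
  fixes T :: "2\<Rightarrow>2\<Rightarrow>2\<Rightarrow>real"
  assumes Q: "\<forall>i j k. T i j k = (\<Sum>a\<in>UNIV. \<Sum>b\<in>UNIV. \<Sum>c\<in>UNIV. Q_rot$i$a * Q_rot$j$b * Q_rot$k$c * T a b c)"
   and S: "\<forall>i j k. T i j k = - (\<Sum>a\<in>UNIV. \<Sum>b\<in>UNIV. \<Sum>c\<in>UNIV. S_refl$i$a * S_refl$j$b * S_refl$k$c * T a b c)"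
  shows "\<forall>i j k. T i j k = T 1 1 1 * (E3 1 1 1 i j k - 3 * sym3 (E3 1 2 2) i j k)"
proof -
  have Q0_111: "T 1 1 1 = (-1/8) * T 1 1 1 + (-1/8) * (sqrt 3 * T 1 1 2) + (-1/8) * (sqrt 3 * T 1 2 1) + (-3/8) * T 1 2 2 + (-1/8) * (sqrt 3 * T 2 1 1) + (-3/8) * T 2 1 2 + (-3/8) * T 2 2 1 + (-3/8) * (sqrt 3 * T 2 2 2)"
    using Q[rule_format, of 1 1 1] unfolding sum_2 Q_rot_def cos_120 sin_120 vector_2
    by (simp add: algebra_simps s3a)
  have Q0_112: "T 1 1 2 = (1/8) * (sqrt 3 * T 1 1 1) + (-1/8) * T 1 1 2 + (3/8) * T 1 2 1 + (-1/8) * (sqrt 3 * T 1 2 2) + (3/8) * T 2 1 1 + (-1/8) * (sqrt 3 * T 2 1 2) + (3/8) * (sqrt 3 * T 2 2 1) + (-3/8) * T 2 2 2"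
    using Q[rule_format, of 1 1 2] unfolding sum_2 Q_rot_def cos_120 sin_120 vector_2
    by (simp add: algebra_simps s3a)
  have Q0_121: "T 1 2 1 = (1/8) * (sqrt 3 * T 1 1 1) + (3/8) * T 1 1 2 + (-1/8) * T 1 2 1 + (-1/8) * (sqrt 3 * T 1 2 2) + (3/8) * T 2 1 1 + (3/8) * (sqrt 3 * T 2 1 2) + (-1/8) * (sqrt 3 * T 2 2 1) + (-3/8) * T 2 2 2"
    using Q[rule_format, of 1 2 1] unfolding sum_2 Q_rot_def cos_120 sin_120 vector_2
    by (simp add: algebra_simps s3a)
  have Q0_122: "T 1 2 2 = (-3/8) * T 1 1 1 + (1/8) * (sqrt 3 * T 1 1 2) + (1/8) * (sqrt 3 * T 1 2 1) + (-1/8) * T 1 2 2 + (-3/8) * (sqrt 3 * T 2 1 1) + (3/8) * T 2 1 2 + (3/8) * T 2 2 1 + (-1/8) * (sqrt 3 * T 2 2 2)"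
    using Q[rule_format, of 1 2 2] unfolding sum_2 Q_rot_def cos_120 sin_120 vector_2
    by (simp add: algebra_simps s3a)
  have Q0_211: "T 2 1 1 = (1/8) * (sqrt 3 * T 1 1 1) + (3/8) * T 1 1 2 + (3/8) * T 1 2 1 + (3/8) * (sqrt 3 * T 1 2 2) + (-1/8) * T 2 1 1 + (-1/8) * (sqrt 3 * T 2 1 2) + (-1/8) * (sqrt 3 * T 2 2 1) + (-3/8) * T 2 2 2"
    using Q[rule_format, of 2 1 1] unfolding sum_2 Q_rot_def cos_120 sin_120 vector_2
    by (simp add: algebra_simps s3a)
  have Q0_212: "T 2 1 2 = (-3/8) * T 1 1 1 + (1/8) * (sqrt 3 * T 1 1 2) + (-3/8) * (sqrt 3 * T 1 2 1) + (3/8) * T 1 2 2 + (1/8) * (sqrt 3 * T 2 1 1) + (-1/8) * T 2 1 2 + (3/8) * T 2 2 1 + (-1/8) * (sqrt 3 * T 2 2 2)"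
    using Q[rule_format, of 2 1 2] unfolding sum_2 Q_rot_def cos_120 sin_120 vector_2
    by (simp add: algebra_simps s3a)
  have Q1_111: "sqrt 3 * T 1 1 1 = (-1/8) * (sqrt 3 * T 1 1 1) + (-3/8) * T 1 1 2 + (-3/8) * T 1 2 1 + (-3/8) * (sqrt 3 * T 1 2 2) + (-3/8) * T 2 1 1 + (-3/8) * (sqrt 3 * T 2 1 2) + (-3/8) * (sqrt 3 * T 2 2 1) + (-9/8) * T 2 2 2"
    using arg_cong[where f="\<lambda>x. sqrt 3 * x", OF Q[rule_format, of 1 1 1]] unfolding sum_2 Q_rot_def cos_120 sin_120 vector_2
    by (simp add: algebra_simps s3a)
  have Q1_112: "sqrt 3 * T 1 1 2 = (3/8) * T 1 1 1 + (-1/8) * (sqrt 3 * T 1 1 2) + (3/8) * (sqrt 3 * T 1 2 1) + (-3/8) * T 1 2 2 + (3/8) * (sqrt 3 * T 2 1 1) + (-3/8) * T 2 1 2 + (9/8) * T 2 2 1 + (-3/8) * (sqrt 3 * T 2 2 2)"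
    using arg_cong[where f="\<lambda>x. sqrt 3 * x", OF Q[rule_format, of 1 1 2]] unfolding sum_2 Q_rot_def cos_120 sin_120 vector_2
    by (simp add: algebra_simps s3a)
  have Q1_121: "sqrt 3 * T 1 2 1 = (3/8) * T 1 1 1 + (3/8) * (sqrt 3 * T 1 1 2) + (-1/8) * (sqrt 3 * T 1 2 1) + (-3/8) * T 1 2 2 + (3/8) * (sqrt 3 * T 2 1 1) + (9/8) * T 2 1 2 + (-3/8) * T 2 2 1 + (-3/8) * (sqrt 3 * T 2 2 2)"
    using arg_cong[where f="\<lambda>x. sqrt 3 * x", OF Q[rule_format, of 1 2 1]] unfolding sum_2 Q_rot_def cos_120 sin_120 vector_2
    by (simp add: algebra_simps s3a)
  have Q1_122: "sqrt 3 * T 1 2 2 = (-3/8) * (sqrt 3 * T 1 1 1) + (3/8) * T 1 1 2 + (3/8) * T 1 2 1 + (-1/8) * (sqrt 3 * T 1 2 2) + (-9/8) * T 2 1 1 + (3/8) * (sqrt 3 * T 2 1 2) + (3/8) * (sqrt 3 * T 2 2 1) + (-3/8) * T 2 2 2"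
    using arg_cong[where f="\<lambda>x. sqrt 3 * x", OF Q[rule_format, of 1 2 2]] unfolding sum_2 Q_rot_def cos_120 sin_120 vector_2
    by (simp add: algebra_simps s3a)
  have Q1_211: "sqrt 3 * T 2 1 1 = (3/8) * T 1 1 1 + (3/8) * (sqrt 3 * T 1 1 2) + (3/8) * (sqrt 3 * T 1 2 1) + (9/8) * T 1 2 2 + (-1/8) * (sqrt 3 * T 2 1 1) + (-3/8) * T 2 1 2 + (-3/8) * T 2 2 1 + (-3/8) * (sqrt 3 * T 2 2 2)"
    using arg_cong[where f="\<lambda>x. sqrt 3 * x", OF Q[rule_format, of 2 1 1]] unfolding sum_2 Q_rot_def cos_120 sin_120 vector_2
    by (simp add: algebra_simps s3a)
  have Q1_212: "sqrt 3 * T 2 1 2 = (-3/8) * (sqrt 3 * T 1 1 1) + (3/8) * T 1 1 2 + (-9/8) * T 1 2 1 + (3/8) * (sqrt 3 * T 1 2 2) + (3/8) * T 2 1 1 + (-1/8) * (sqrt 3 * T 2 1 2) + (3/8) * (sqrt 3 * T 2 2 1) + (-3/8) * T 2 2 2"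
    using arg_cong[where f="\<lambda>x. sqrt 3 * x", OF Q[rule_format, of 2 1 2]] unfolding sum_2 Q_rot_def cos_120 sin_120 vector_2
    by (simp add: algebra_simps s3a)
  have S0_112: "T 1 1 2 = (-1/8) * (sqrt 3 * T 1 1 1) + (1/8) * T 1 1 2 + (-3/8) * T 1 2 1 + (1/8) * (sqrt 3 * T 1 2 2) + (-3/8) * T 2 1 1 + (1/8) * (sqrt 3 * T 2 1 2) + (-3/8) * (sqrt 3 * T 2 2 1) + (3/8) * T 2 2 2"
    using S[rule_format, of 1 1 2] unfolding sum_2 S_refl_def vector_2
    by (simp add: algebra_simps s3a)
  have z1: "T 1 1 2 = 0" using Q0_112 S0_112 by linarith
  have z2: "T 1 2 1 = 0" using Q1_111 Q0_121 Q1_122 Q1_212 S0_112 by linarith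
  have z3: "T 2 1 1 = 0" using Q1_111 Q1_122 Q0_211 Q1_212 S0_112 by linarith
  have z4: "T 2 2 2 = 0" using Q1_111 Q0_112 Q0_121 Q1_122 Q0_211 Q1_212 S0_112 by linarith
  have z5: "T 1 2 2 = - T 1 1 1" using Q0_111 Q1_112 Q1_121 Q0_122 Q1_211 by linarith
  have z6: "T 2 1 2 = - T 1 1 1" using Q0_111 Q1_112 Q1_121 Q1_211 Q0_212 by linarith
  have z7: "T 2 2 1 = - T 1 1 1" using Q0_111 Q1_112 Q1_121 Q0_122 Q1_211 Q0_212 by linarith
  show ?thesis
    unfolding forall_2 E3_def sym3_def
    using z1 z2 z3 z4 z5 z6 z7 by simp
qed

lemma Tf_inv:
  fixes rho :: "'r::finite \<Rightarrow> real^2" and DD :: "'r \<Rightarrow> 'r \<Rightarrow> 'r \<Rightarrow> real"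
  assumes bij: "bij \<pi>" and rp: "\<And>r. rho (\<pi> r) = Mm *v rho r"
    and DDp: "\<And>r s t. DD (\<pi> r) (\<pi> s) (\<pi> t) = e * DD r s t"
  shows "(\<Sum>t\<in>UNIV. rho t$k * (\<Sum>s\<in>UNIV. rho s$j * (\<Sum>r\<in>UNIV. rho r$i * DD r s t)))
    = e * (\<Sum>a\<in>UNIV. \<Sum>b\<in>UNIV. \<Sum>c\<in>UNIV. Mm$i$a * Mm$j$b * Mm$k$c *
         (\<Sum>t\<in>UNIV. rho t $ c * (\<Sum>s\<in>UNIV. rho s $ b * (\<Sum>r\<in>UNIV. rho r $ a * DD r s t))))"
proof -
  have r1: "(\<Sum>r\<in>UNIV. rho r$i * DD r s t) = (\<Sum>r\<in>UNIV. rho (\<pi> r)$i * DD (\<pi> r) s t)" for s t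
    using sum_bij_reindex[OF bij, of "\<lambda>r. rho r$i * DD r s t"] by simp
  have r2: "(\<Sum>s\<in>UNIV. rho s$j * (\<Sum>r\<in>UNIV. rho (\<pi> r)$i * DD (\<pi> r) s t))
      = (\<Sum>s\<in>UNIV. rho (\<pi> s)$j * (\<Sum>r\<in>UNIV. rho (\<pi> r)$i * DD (\<pi> r) (\<pi> s) t))" for t
    using sum_bij_reindex[OF bij, of "\<lambda>s. rho s$j * (\<Sum>r\<in>UNIV. rho (\<pi> r)$i * DD (\<pi> r) s t)"] by simp
  have r3: "(\<Sum>t\<in>UNIV. rho t$k * (\<Sum>s\<in>UNIV. rho (\<pi> s)$j * (\<Sum>r\<in>UNIV. rho (\<pi> r)$i * DD (\<pi> r) (\<pi> s) t)))
      = (\<Sum>t\<in>UNIV. rho (\<pi> t)$k * (\<Sum>s\<in>UNIV. rho (\<pi> s)$j * (\<Sum>r\<in>UNIV. rho (\<pi> r)$i * DD (\<pi> r) (\<pi> s) (\<pi> t))))"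
    using sum_bij_reindex[OF bij, of "\<lambda>t. rho t$k * (\<Sum>s\<in>UNIV. rho (\<pi> s)$j * (\<Sum>r\<in>UNIV. rho (\<pi> r)$i * DD (\<pi> r) (\<pi> s) t))"] by simp
  have "(\<Sum>t\<in>UNIV. rho t$k * (\<Sum>s\<in>UNIV. rho s$j * (\<Sum>r\<in>UNIV. rho r$i * DD r s t)))
     = (\<Sum>t\<in>UNIV. (Mm *v rho t)$k * (\<Sum>s\<in>UNIV. (Mm *v rho s)$j * (\<Sum>r\<in>UNIV. (Mm *v rho r)$i * (e * DD r s t))))"
    unfolding r1 unfolding r2 unfolding r3 unfolding rp DDp ..
  also have "\<dots> = (\<Sum>a\<in>UNIV. \<Sum>b\<in>UNIV. \<Sum>c\<in>UNIV. Mm$i$a * Mm$j$b * Mm$k$c *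
         (\<Sum>t\<in>UNIV. rho t $ c * (\<Sum>s\<in>UNIV. rho s $ b * (\<Sum>r\<in>UNIV. rho r $ a * (e * DD r s t)))))"
    by (rule mat_expand)
  also have "\<dots> = e * (\<Sum>a\<in>UNIV. \<Sum>b\<in>UNIV. \<Sum>c\<in>UNIV. Mm$i$a * Mm$j$b * Mm$k$c *
         (\<Sum>t\<in>UNIV. rho t $ c * (\<Sum>s\<in>UNIV. rho s $ b * (\<Sum>r\<in>UNIV. rho r $ a * DD r s t))))"
    by (simp add: sum_distrib_left mult_ac)
  finally show ?thesis .
qed

lemma reindex_axis:
  fixes rho :: "'r::finite \<Rightarrow> real^2"
  assumes inj: "inj (\<lambda>r. inv rho (Mm *v rho r))"
  shows "\<epsilon> *\<^sub>R reindex rho Mm (A + h *\<^sub>R axis (inv rho (Mm *v rho t)) 1) = \<epsilon> *\<^sub>R reindex rho Mm A + (\<epsilon>*h) *\<^sub>R axis t 1"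
proof -
  have "\<And>r. (inv rho (Mm *v rho r) = inv rho (Mm *v rho t)) = (r = t)"
    using inj by (auto dest: injD)
  then show ?thesis
    by (simp add: reindex_def vec_eq_iff axis_def algebra_simps)
qed

lemma reindex0: "reindex rho Mm 0 = 0"
  by (simp add: reindex_def vec_eq_iff)

theorem corollary5p5:
  fixes R :: "(real^2) set" and rho :: "'r::finite \<Rightarrow> real^2"
    and V :: "real^'r \<Rightarrow> real" and p c0 :: real
  assumes R_enum: "inj rho" "R = range rho"
    and R_sub: "R \<subseteq> Lambda_tri - {0}"
    and R_span: "zspan R = Lambda_tri"
    and R_Q: "(\<lambda>x. Q_rot *v x) ` R = R"
    and R_S: "(\<lambda>x. S_refl *v x) ` R = R"
    and V_C6: "Ck 6 V"
    and V_Q: "\<And>A. V A = V (reindex rho Q_rot A)"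
    and V_S: "\<And>A. V A = V (- reindex rho S_refl A)"
    and p_pos: "p > 0"
    and V_per: "\<And>r A. V (A + p *\<^sub>R axis r 1) = V A"
    and V_minper: "\<And>r q. 0 < q \<Longrightarrow> q < p \<Longrightarrow> \<not> (\<forall>A. V (A + q *\<^sub>R axis r 1) = V A)"
    and c0_pos: "c0 > 0"
    and stable: "\<And>u. (\<lambda>x. \<Sum>r\<in>UNIV. (Ddiff rho r u x)\<^sup>2) summable_on Lambda_tri \<Longrightarrow>
        (\<Sum>\<^sub>\<infinity>x\<in>Lambda_tri. \<Sum>r\<in>UNIV. \<Sum>s\<in>UNIV.
            pd s (pd r V) 0 * Ddiff rho r u x * Ddiff rho s u x)
        \<ge> c0 * (\<Sum>\<^sub>\<infinity>x\<in>Lambda_tri. \<Sum>r\<in>UNIV. (Ddiff rho r u x)\<^sup>2)"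
  defines "W \<equiv> (\<lambda>F::real^2. (1 / det A_tri) * V (\<chi> r. F \<bullet> rho r))"
  defines "T \<equiv> (\<lambda>i j k. pd i (pd j (pd k W)) 0)"
  shows "\<exists>c_quad::real.
     (\<forall>i j k. T i j k = c_quad * (E3 1 1 1 i j k - 3 * sym3 (E3 1 2 2) i j k)) \<and>
     (\<forall>u v :: real^2 \<Rightarrow> real. twice_diff u \<longrightarrow> twice_diff v \<longrightarrow>
        (\<forall>x. divg (\<lambda>y. \<chi> i. \<Sum>j\<in>UNIV. \<Sum>k\<in>UNIV. T i j k * pd j u y * pd k v y) x
          = c_quad * ((vector [pd 1 (pd 1 v) x - pd 2 (pd 2 v) x, -2 * pd 1 (pd 2 v) x] :: real^2) \<bullet> grad u x
                    + (vector [pd 1 (pd 1 u) x - pd 2 (pd 2 u) x, -2 * pd 1 (pd 2 u) x] :: real^2) \<bullet> grad v x)))"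
proof -
  define c where "c = 1 / det A_tri"
  define DD where "DD r s t = pd r (pd s (pd t V)) 0" for r s t
  define Tf where "Tf i j k = (\<Sum>t\<in>UNIV. rho t$k * (\<Sum>s\<in>UNIV. rho s$j * (\<Sum>r\<in>UNIV. rho r$i * DD r s t)))" for i j k
  have c0: "Ck (Suc 5) V" using V_C6 by (simp add: numeral_eq_Suc)
  have c1: "Ck (Suc 4) (pd t V)" for t using V_C6 by (simp add: numeral_eq_Suc)
  have c2: "Ck (Suc 3) (pd s (pd t V))" for s t using V_C6 by (simp add: numeral_eq_Suc)
  note C0 = Ck_C1[OF c0]
  note C1 = Ck_C1[OF c1]
  note C2 = Ck_C1[OF c2]
  have d1: "pd k W = (\<lambda>F. c * (\<Sum>t\<in>UNIV. rho t $ k * pd t V (\<chi> r. F \<bullet> rho r)))" for k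
  proof
    fix F
    have "((\<lambda>h. c * V (\<chi> r. (F + h *\<^sub>R axis k 1) \<bullet> rho r)) has_real_derivative c * (\<Sum>t\<in>UNIV. rho t $ k * pd t V (\<chi> r. F \<bullet> rho r))) (at 0)"
      by (intro DERIV_cmult lineL) (use C0 in auto)
    then show "pd k W F = c * (\<Sum>t\<in>UNIV. rho t $ k * pd t V (\<chi> r. F \<bullet> rho r))"
      unfolding pd_def W_def c_def by (simp add: DERIV_imp_deriv)
  qed
  have d2: "pd j (pd k W) = (\<lambda>F. c * (\<Sum>t\<in>UNIV. rho t $ k * (\<Sum>s\<in>UNIV. rho s $ j * pd s (pd t V) (\<chi> r. F \<bullet> rho r))))" for j k
  proof
    fix F
    have "((\<lambda>h. c * (\<Sum>t\<in>UNIV. rho t $ k * pd t V (\<chi> r. (F + h *\<^sub>R axis j 1) \<bullet> rho r))) has_real_derivative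
        c * (\<Sum>t\<in>UNIV. rho t $ k * (\<Sum>s\<in>UNIV. rho s $ j * pd s (pd t V) (\<chi> r. F \<bullet> rho r)))) (at 0)"
      by (intro DERIV_cmult DERIV_sum lineL) (use C1 in auto)
    then show "pd j (pd k W) F = c * (\<Sum>t\<in>UNIV. rho t $ k * (\<Sum>s\<in>UNIV. rho s $ j * pd s (pd t V) (\<chi> r. F \<bullet> rho r)))"
      unfolding d1 pd_def by (simp add: DERIV_imp_deriv)
  qed
  have d3: "pd i (pd j (pd k W)) F = c * (\<Sum>t\<in>UNIV. rho t $ k * (\<Sum>s\<in>UNIV. rho s $ j * (\<Sum>r\<in>UNIV. rho r $ i * pd r (pd s (pd t V)) (\<chi> r. F \<bullet> rho r))))" for i j k F
  proof -
    have "((\<lambda>h. c * (\<Sum>t\<in>UNIV. rho t $ k * (\<Sum>s\<in>UNIV. rho s $ j * pd s (pd t V) (\<chi> r. (F + h *\<^sub>R axis i 1) \<bullet> rho r)))) has_real_derivative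
        c * (\<Sum>t\<in>UNIV. rho t $ k * (\<Sum>s\<in>UNIV. rho s $ j * (\<Sum>r\<in>UNIV. rho r $ i * pd r (pd s (pd t V)) (\<chi> r. F \<bullet> rho r))))) (at 0)"
      by (intro DERIV_cmult DERIV_sum lineL) (use C2 in auto)
    then show ?thesis
      unfolding d2 pd_def by (simp add: DERIV_imp_deriv)
  qed
  have L0: "(\<chi> r. (0::real^2) \<bullet> rho r) = 0" by (simp add: vec_eq_iff)
  have TT: "T i j k = c * Tf i j k" for i j k
    unfolding T_def d3 L0 Tf_def DD_def ..
  have inv_gen: "\<forall>i j k. T i j k = e * (\<Sum>a\<in>UNIV. \<Sum>b\<in>UNIV. \<Sum>c\<in>UNIV. Mm$i$a * Mm$j$b * Mm$k$c * T a b c)"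
    if MR: "(\<lambda>x. Mm *v x) ` R = R" and VM: "\<And>A. V A = V (\<epsilon> *\<^sub>R reindex rho Mm A)" and e: "e = \<epsilon> * \<epsilon> * \<epsilon>" for Mm \<epsilon> e
  proof (intro allI)
    fix i j k :: 2
    define \<pi> where "\<pi> r = inv rho (Mm *v rho r)" for r
    have bij: "bij \<pi>" and rp: "\<And>r. rho (\<pi> r) = Mm *v rho r"
      using sym_props[OF R_enum MR] unfolding \<pi>_def by auto
    have injp: "inj (\<lambda>r. inv rho (Mm *v rho r))" using bij unfolding \<pi>_def bij_def by simp
    have DDp: "DD (\<pi> r) (\<pi> s) (\<pi> t) = e * DD r s t" for r s t
      unfolding DD_def e
      by (rule D_inv[OF V_C6, of "\<lambda>A. \<epsilon> *\<^sub>R reindex rho Mm A"]) (use VM reindex_axis[OF injp] in \<open>auto simp: \<pi>_def reindex0\<close>)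
    have tf: "Tf i j k = e * (\<Sum>a\<in>UNIV. \<Sum>b\<in>UNIV. \<Sum>c\<in>UNIV. Mm$i$a * Mm$j$b * Mm$k$c * Tf a b c)"
      unfolding Tf_def by (rule Tf_inv[of \<pi> rho Mm DD e, OF bij rp DDp])
    have "T i j k = c * (e * (\<Sum>a\<in>UNIV. \<Sum>b\<in>UNIV. \<Sum>c\<in>UNIV. Mm$i$a * Mm$j$b * Mm$k$c * Tf a b c))"
      unfolding TT tf ..
    also have "\<dots> = e * (\<Sum>a\<in>UNIV. \<Sum>b\<in>UNIV. \<Sum>c\<in>UNIV. Mm$i$a * Mm$j$b * Mm$k$c * T a b c)"
      unfolding TT by (simp add: sum_distrib_left mult_ac)
    finally show "T i j k = e * (\<Sum>a\<in>UNIV. \<Sum>b\<in>UNIV. \<Sum>c\<in>UNIV. Mm$i$a * Mm$j$b * Mm$k$c * T a b c)" .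
  qed
  have TQ: "\<forall>i j k. T i j k = (\<Sum>a\<in>UNIV. \<Sum>b\<in>UNIV. \<Sum>c\<in>UNIV. Q_rot$i$a * Q_rot$j$b * Q_rot$k$c * T a b c)"
  proof -
    have "\<And>A. V A = V (1 *\<^sub>R reindex rho Q_rot A)" by (simp only: scaleR_one) (rule V_Q)
    from inv_gen[OF R_Q this refl, unfolded mult_1] show ?thesis .
  qed
  have TS: "\<forall>i j k. T i j k = - (\<Sum>a\<in>UNIV. \<Sum>b\<in>UNIV. \<Sum>c\<in>UNIV. S_refl$i$a * S_refl$j$b * S_refl$k$c * T a b c)"
  proof -
    have hS: "\<And>A. V A = V ((-1) *\<^sub>R reindex rho S_refl A)" by (simp only: scaleR_minus1_left) (rule V_S)
    have e: "\<And>X::real. (-1) * (-1) * (-1) * X = - X" by simp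
    show ?thesis using inv_gen[OF R_S hS refl, unfolded e] .
  qed
  have Tform: "\<forall>i j k. T i j k = T 1 1 1 * (E3 1 1 1 i j k - 3 * sym3 (E3 1 2 2) i j k)"
    by (rule solve[OF TQ TS])
  show ?thesis
  proof (intro exI[of _ "T 1 1 1"] conjI allI impI)
    fix i j k show "T i j k = T 1 1 1 * (E3 1 1 1 i j k - 3 * sym3 (E3 1 2 2) i j k)" using Tform by blast
  next
    fix u v :: "real^2 \<Rightarrow> real" and x
    assume tu: "twice_diff u" and tv: "twice_diff v"
    have ud: "\<forall>j x. pd j u differentiable (at x)" and vd: "\<forall>k x. pd k v differentiable (at x)"
      using tu tv by (auto simp: twice_diff_def)
    have su: "pd 2 (pd 1 u) x = pd 1 (pd 2 u) x" using schwarz tu by (auto simp: twice_diff_def)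
    have sv: "pd 2 (pd 1 v) x = pd 1 (pd 2 v) x" using schwarz tv by (auto simp: twice_diff_def)
    define q where "q = T 1 1 1"
    have Tv: "T 1 1 1 = q" "T 1 1 2 = 0" "T 1 2 1 = 0" "T 2 1 1 = 0" "T 2 2 2 = 0"
       "T 1 2 2 = - q" "T 2 1 2 = - q" "T 2 2 1 = - q"
      unfolding q_def
      using Tform[rule_format, of 1 1 2] Tform[rule_format, of 1 2 1]
        Tform[rule_format, of 2 1 1] Tform[rule_format, of 2 2 2] Tform[rule_format, of 1 2 2]
        Tform[rule_format, of 2 1 2] Tform[rule_format, of 2 2 1]
      by (simp_all add: E3_def sym3_def)
    have "divg (\<lambda>y. \<chi> i. \<Sum>j\<in>UNIV. \<Sum>k\<in>UNIV. T i j k * pd j u y * pd k v y) x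
        = (\<Sum>i\<in>UNIV. \<Sum>j\<in>UNIV. \<Sum>k\<in>UNIV. T i j k * (pd i (pd j u) x * pd k v x + pd j u x * pd i (pd k v) x))"
      unfolding divg_def by (simp add: pd_bilin[OF ud vd])
    also have "\<dots> = q * ((vector [pd 1 (pd 1 v) x - pd 2 (pd 2 v) x, -2 * pd 1 (pd 2 v) x] :: real^2) \<bullet> grad u x
                    + (vector [pd 1 (pd 1 u) x - pd 2 (pd 2 u) x, -2 * pd 1 (pd 2 u) x] :: real^2) \<bullet> grad v x)"
      by (simp add: sum_2 Tv su sv grad_def inner_vec_def algebra_simps)
    finally show "divg (\<lambda>y. \<chi> i. \<Sum>j\<in>UNIV. \<Sum>k\<in>UNIV. T i j k * pd j u y * pd k v y) x
          = T 1 1 1 * ((vector [pd 1 (pd 1 v) x - pd 2 (pd 2 v) x, -2 * pd 1 (pd 2 v) x] :: real^2) \<bullet> grad u x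
                    + (vector [pd 1 (pd 1 u) x - pd 2 (pd 2 u) x, -2 * pd 1 (pd 2 u) x] :: real^2) \<bullet> grad v x)"
      unfolding q_def .
  qed
qed

end
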